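(* For the $2$-server problem on the line, for any instance $I$, any prediction, and any $\lambda\in(0,1]$, there is $c\ge0$ depending only on the initial configuration such that $\mathrm{LambdaDC}(I)\le(1+1/\lambda)\cdot\mathrm{OPT}(I)+c$.
   Context: The $2$-server problem on the line: servers on $\mathbb{R}$ labeled $s_1\le s_2$, requests revealed online and served by moving a server to them; cost = total distance moved; $\mathrm{OPT}(I)$ is the optimal offline cost. A prediction gives for each request $r_t$ an index $p_t\in\{1,2\}$. LambdaDC: if $r_t<s_1$ or $r_t>s_2$, move only the closest server; if $s_1<r_t<s_2$ and $p_t=1$, move $s_1$ at speed $1$ and $s_2$ at speed $\lambda$ towards $r_t$ until one reaches it; if $p_t=2$, the speeds are swapped. *)

theory Defs
  imports Complex_Main
begin

text \<open>2-server problem on the real line.  A configuration is a pair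
 (s1, s2) of server positions.  A prediction for a request is an index 1 or 2.\<close>

text \<open>One step of LambdaDC with speed parameter lam, current configuration (a,b)
 (a \<le> b), request r and predicted index p.  Returns the new configuration and
 the cost (total distance moved) of the step.\<close>
definition lambda_dc_step :: "real \<Rightarrow> real \<times> real \<Rightarrow> real \<Rightarrow> nat \<Rightarrow> (real \<times> real) \<times> real" where
  "lambda_dc_step lam c r p =
    (let a = fst c; b = snd c in
     if r \<le> a then ((r, b), a - r)
     else if b \<le> r then ((a, r), r - b)
     else if p = 1 then
       (let t = min (r - a) ((b - r) / lam) in ((a + t, b - lam * t), t + lam * t))
     else
       (let t = min ((r - a) / lam) (b - r) in ((a + lam * t, b - t), lam * t + t)))"

fun lambda_dc_cost :: "real \<Rightarrow> real \<times> real \<Rightarrow> real list \<Rightarrow> nat list \<Rightarrow> real" where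
  "lambda_dc_cost lam c (r # rs) (p # ps) =
     (let (c', k) = lambda_dc_step lam c r p in k + lambda_dc_cost lam c' rs ps)"
| "lambda_dc_cost lam c _ _ = 0"

text \<open>Movement cost of a sequence of configurations (servers are labelled:
 first/second component is the position of server 1/2), starting from c.\<close>
fun move_cost :: "real \<times> real \<Rightarrow> (real \<times> real) list \<Rightarrow> real" where
  "move_cost c [] = 0"
| "move_cost c (y # ys) = \<bar>fst y - fst c\<bar> + \<bar>snd y - snd c\<bar> + move_cost y ys"

definition feasible_schedule :: "real list \<Rightarrow> (real \<times> real) list \<Rightarrow> bool" where
  "feasible_schedule rs xs \<longleftrightarrow> length xs = length rs \<and>
     (\<forall>t < length rs. rs ! t = fst (xs ! t) \<or> rs ! t = snd (xs ! t))"

definition opt_cost :: "real \<times> real \<Rightarrow> real list \<Rightarrow> real" where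
  "opt_cost c rs = Inf {move_cost c xs | xs. feasible_schedule rs xs}"

end

theory Submission
  imports Defs
begin

definition MM :: "real \<Rightarrow> real \<Rightarrow> real \<Rightarrow> real \<Rightarrow> real" where
  "MM a b x y = min (\<bar>a - x\<bar> + \<bar>b - y\<bar>) (\<bar>a - y\<bar> + \<bar>b - x\<bar>)"

lemma MM_sym: "MM a b x y = MM a b y x"
  unfolding MM_def by (simp add: min.commute)

lemma MM_nonneg: "MM a b x y \<ge> 0"
  unfolding MM_def by simp

lemma MM_lip: "MM a b x' y' \<le> MM a b x y + \<bar>x' - x\<bar> + \<bar>y' - y\<bar>"
  unfolding MM_def min_def by (auto split: if_splits abs_split)

definition Psi :: "real \<Rightarrow> real \<Rightarrow> real \<Rightarrow> real \<Rightarrow> real \<Rightarrow> real" where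
  "Psi lam a b x y = (1 + lam) * MM a b x y + (b - a)"

lemma key:
  assumes lam: "0 < lam" "lam \<le> 1" and ab: "a \<le> b"
    and dM: "MM a' b' x y - MM a b x y \<le> d"
    and k: "lam * k + (1 + lam) * d + (b' - a') - (b - a) \<le> 0"
  shows "lam * k + Psi lam a' b' x y \<le> Psi lam a b x y"
proof -
  have "(1 + lam) * (MM a' b' x y - MM a b x y) \<le> (1 + lam) * d"
    using dM lam by (intro mult_left_mono) auto
  then show ?thesis using k unfolding Psi_def by (simp add: algebra_simps)
qed

lemma step_x:
  assumes lam: "0 < lam" "lam \<le> 1" and ab: "a \<le> b" and rx: "r = x"
    and st: "lambda_dc_step lam (a, b) r p = ((a', b'), k)"
  shows "a' \<le> b' \<and> lam * k + Psi lam a' b' x y \<le> Psi lam a b x y"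
proof (cases "r \<le> a")
  case True
  then have e: "a' = r" "b' = b" "k = a - r" using st by (auto simp: lambda_dc_step_def)
  have "MM a' b' x y - MM a b x y \<le> -(a - r)"
    using e rx True ab unfolding MM_def min_def by (auto split: if_splits abs_split)
  moreover have "lam * k + (1 + lam) * (-(a - r)) + (b' - a') - (b - a) \<le> 0"
    by (simp add: e algebra_simps)
  ultimately show ?thesis using key[OF lam ab] e True ab by auto
next
  case nra: False
  show ?thesis
  proof (cases "b \<le> r")
    case True
    then have e: "a' = a" "b' = r" "k = r - b" using st nra by (auto simp: lambda_dc_step_def)
    have "MM a' b' x y - MM a b x y \<le> -(r - b)"
      using e rx True ab unfolding MM_def min_def by (auto split: if_splits abs_split)
    moreover have "lam * k + (1 + lam) * (-(r - b)) + (b' - a') - (b - a) \<le> 0"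
      by (simp add: e algebra_simps)
    ultimately show ?thesis using key[OF lam ab] e True nra by auto
  next
    case nbr: False
    show ?thesis
    proof (cases "p = 1")
      case True
      define t where "t = min (r - a) ((b - r) / lam)"
      define u where "u = lam * t"
      have e: "a' = a + t" "b' = b - u" "k = t + u"
        using st nra nbr True by (auto simp: lambda_dc_step_def t_def u_def Let_def)
      have t1: "t \<le> r - a" unfolding t_def by simp
      have t2: "t \<le> (b - r) / lam" unfolding t_def by simp
      have u2: "u \<le> b - r" using t2 lam unfolding u_def by (simp add: field_simps)
      have t0: "t \<ge> 0" using nra nbr lam unfolding t_def by auto
      have u0: "u \<ge> 0" using t0 lam unfolding u_def by simp
      have ut: "u \<le> t" using t0 lam unfolding u_def by (simp add: mult_left_le_one_le)
      have "MM a' b' x y - MM a b x y \<le> t - u"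
        using e rx t1 u2 t0 u0 ut nra nbr ab unfolding MM_def min_def by (auto split: if_splits abs_split)
      moreover have "lam * k + (1 + lam) * (t - u) + (b' - a') - (b - a) \<le> 0"
        using e u_def by (simp add: algebra_simps)
      ultimately show ?thesis using key[OF lam ab] e t1 u2 by auto
    next
      case False
      define t where "t = min ((r - a) / lam) (b - r)"
      define u where "u = lam * t"
      have e: "a' = a + u" "b' = b - t" "k = u + t"
        using st nra nbr False by (auto simp: lambda_dc_step_def t_def u_def Let_def)
      have t1: "t \<le> b - r" unfolding t_def by simp
      have t2: "t \<le> (r - a) / lam" unfolding t_def by simp
      have u2: "u \<le> r - a" using t2 lam unfolding u_def by (simp add: field_simps)
      have t0: "t \<ge> 0" using nra nbr lam unfolding t_def by auto
      have u0: "u \<ge> 0" using t0 lam unfolding u_def by simp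
      have ut: "u \<le> t" using t0 lam unfolding u_def by (simp add: mult_left_le_one_le)
      have "MM a' b' x y - MM a b x y \<le> t - u"
        using e rx t1 u2 t0 u0 ut nra nbr ab unfolding MM_def min_def by (auto split: if_splits abs_split)
      moreover have "lam * k + (1 + lam) * (t - u) + (b' - a') - (b - a) \<le> 0"
        using e u_def by (simp add: algebra_simps)
      ultimately show ?thesis using key[OF lam ab] e t1 u2 by auto
    qed
  qed
qed

lemma step:
  assumes lam: "0 < lam" "lam \<le> 1" and ab: "a \<le> b" and rx: "r = x \<or> r = y"
    and st: "lambda_dc_step lam (a, b) r p = ((a', b'), k)"
  shows "a' \<le> b' \<and> lam * k + Psi lam a' b' x y \<le> Psi lam a b x y"
proof (cases "r = x")
  case True
  then show ?thesis using step_x[OF lam ab True st] by simp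
next
  case False
  then have "r = y" using rx by simp
  from step_x[OF lam ab this st, of x] show ?thesis
    unfolding Psi_def using MM_sym by metis
qed

lemma main:
  assumes lam: "0 < lam" "lam \<le> 1"
  shows "a \<le> b \<Longrightarrow> list_all2 (\<lambda>r c. r = fst c \<or> r = snd c) rs xs \<Longrightarrow>
    lam * lambda_dc_cost lam (a, b) rs ps \<le> (1 + lam) * move_cost (x, y) xs + Psi lam a b x y"
proof (induction rs arbitrary: a b ps xs x y)
  case Nil
  have "0 \<le> Psi lam a b x y" using Nil MM_nonneg[of a b x y] lam unfolding Psi_def by simp
  then show ?case using Nil by simp
next
  case (Cons r rs)
  obtain xc xs' where xs: "xs = xc # xs'" using Cons.prems(2) by (cases xs) auto
  obtain x' y' where xc: "xc = (x', y')" by (cases xc)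
  have rr: "r = x' \<or> r = y'" and rest: "list_all2 (\<lambda>r c. r = fst c \<or> r = snd c) rs xs'"
    using Cons.prems(2) xs xc by auto
  show ?case
  proof (cases ps)
    case Nil
    have "0 \<le> Psi lam a b x y" using MM_nonneg[of a b x y] lam Cons.prems unfolding Psi_def by simp
    moreover have "0 \<le> move_cost (x, y) xs"
    proof -
      have "\<And>c. 0 \<le> move_cost c zs" for zs by (induction zs) auto
      then show ?thesis by blast
    qed
    ultimately show ?thesis using Nil lam
      by (simp add: add_nonneg_nonneg)
  next
    case (Cons p ps')
    obtain a' b' k where st: "lambda_dc_step lam (a, b) r p = ((a', b'), k)"
      by (metis prod.exhaust)
    from step[OF lam Cons.prems(1) rr st] have s: "a' \<le> b'" "lam * k + Psi lam a' b' x' y' \<le> Psi lam a b x' y'"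
      by auto
    have ih: "lam * lambda_dc_cost lam (a', b') rs ps' \<le> (1 + lam) * move_cost (x', y') xs' + Psi lam a' b' x' y'"
      using Cons.IH[OF s(1) rest] .
    have lip: "Psi lam a b x' y' \<le> Psi lam a b x y + (1 + lam) * (\<bar>x' - x\<bar> + \<bar>y' - y\<bar>)"
    proof -
      have "(1 + lam) * MM a b x' y' \<le> (1 + lam) * (MM a b x y + \<bar>x' - x\<bar> + \<bar>y' - y\<bar>)"
        using MM_lip lam by (intro mult_left_mono) auto
      then show ?thesis unfolding Psi_def by (simp add: algebra_simps)
    qed
    have "lam * lambda_dc_cost lam (a, b) (r # rs) ps = lam * k + lam * lambda_dc_cost lam (a', b') rs ps'"
      using Cons st by (simp add: algebra_simps)
    also have "\<dots> \<le> (1 + lam) * move_cost (x, y) xs + Psi lam a b x y"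
      using ih s lip xs xc by (simp add: algebra_simps)
    finally show ?thesis .
  qed
qed

theorem lemma6:
  fixes lam :: real and s1 s2 :: real
  assumes "0 < lam" and "lam \<le> 1" and "s1 \<le> s2"
  shows "\<exists>c \<ge> 0. \<forall>(rs :: real list) (ps :: nat list).
           length ps = length rs \<longrightarrow> set ps \<subseteq> {1, 2} \<longrightarrow>
           lambda_dc_cost lam (s1, s2) rs ps \<le> (1 + 1 / lam) * opt_cost (s1, s2) rs + c"
proof (intro exI[of _ "(s2 - s1) / lam"] conjI allI impI)
  show "0 \<le> (s2 - s1) / lam" using assms by simp
  fix rs :: "real list" and ps :: "nat list"
  let ?A = "lambda_dc_cost lam (s1, s2) rs ps"
  let ?S = "{move_cost (s1, s2) xs | xs. feasible_schedule rs xs}"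
  have psi0: "Psi lam s1 s2 s1 s2 = s2 - s1" unfolding Psi_def MM_def by simp
  have bnd: "(lam * ?A - (s2 - s1)) / (1 + lam) \<le> v" if vS: "v \<in> ?S" for v
  proof -
    obtain xs where v: "v = move_cost (s1, s2) xs" and f: "feasible_schedule rs xs" using vS by blast
    have "list_all2 (\<lambda>r c. r = fst c \<or> r = snd c) rs xs"
      using f unfolding feasible_schedule_def by (simp add: list_all2_conv_all_nth)
    from main[OF assms(1,2) assms(3) this, of ps s1 s2] psi0
    have "lam * ?A \<le> (1 + lam) * v + (s2 - s1)" using v by simp
    then show ?thesis using assms by (simp add: pos_divide_le_eq algebra_simps)
  qed
  have ne: "?S \<noteq> {}"
  proof -
    have "feasible_schedule rs (map (\<lambda>r. (r, s2)) rs)"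
      unfolding feasible_schedule_def by simp
    then show ?thesis by blast
  qed
  have "(lam * ?A - (s2 - s1)) / (1 + lam) \<le> opt_cost (s1, s2) rs"
    unfolding opt_cost_def by (rule cInf_greatest[OF ne]) (use bnd in blast)
  then have "lam * ?A - (s2 - s1) \<le> (1 + lam) * opt_cost (s1, s2) rs"
    using assms by (simp add: pos_divide_le_eq algebra_simps)
  then have "(lam * ?A - (s2 - s1)) / lam \<le> (1 + lam) * opt_cost (s1, s2) rs / lam"
    using assms by (intro divide_right_mono) auto
  moreover have "(lam * ?A - (s2 - s1)) / lam = ?A - (s2 - s1) / lam"
    using assms by (simp add: diff_divide_distrib)
  ultimately have "?A - (s2 - s1) / lam \<le> (1 + lam) / lam * opt_cost (s1, s2) rs"
    by simp
  moreover have "(1 + lam) / lam = 1 + 1 / lam" using assms by (simp add: field_simps)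
  ultimately show "?A \<le> (1 + 1 / lam) * opt_cost (s1, s2) rs + (s2 - s1) / lam" by simp
qed

end
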